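(* For every $\varepsilon\in(0,\tfrac12)$ there is an $n_0=n_0(\varepsilon)$ such that the following holds for all $n>n_0$. Let $G=(A,B;E_G)$ and $H=(S,T;E_H)$ be bipartite graphs with $|A|=|B|=|S|=|T|=n$ satisfying: (1) $d_G(x)>\left(\tfrac12+\varepsilon\right)n$ for all $x\in A\cup B$; (2) $d_H(x)<\dfrac{\varepsilon^4}{100}\cdot\dfrac{n}{\log n}$ for all $x\in S$; (3) $d_H(y)=1$ for all $y\in T$. Then $H\subseteq G$, i.e. $G$ contains a subgraph isomorphic to $H$ via an isomorphism mapping $S$ onto $A$ and $T$ onto $B$.
   Context: All graphs are simple. $d_G(v)$ denotes the degree of vertex $v$ in graph $G$. For a bipartite graph written $G=(A,B;E)$, $A$ and $B$ are its two vertex classes. *)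

theory Defs
  imports Complex_Main
begin

definition bip_graph :: "'a set \<Rightarrow> 'a set \<Rightarrow> ('a \<times> 'a) set \<Rightarrow> bool" where
  "bip_graph A B E \<longleftrightarrow> finite A \<and> finite B \<and> A \<inter> B = {} \<and> E \<subseteq> A \<times> B"

definition degL :: "('a \<times> 'a) set \<Rightarrow> 'a \<Rightarrow> nat" where
  "degL E x = card {y. (x, y) \<in> E}"

definition degR :: "('a \<times> 'a) set \<Rightarrow> 'a \<Rightarrow> nat" where
  "degR E y = card {x. (x, y) \<in> E}"

definition bip_embeds ::
  "'a set \<Rightarrow> 'a set \<Rightarrow> ('a \<times> 'a) set \<Rightarrow> 'a set \<Rightarrow> 'a set \<Rightarrow> ('a \<times> 'a) set \<Rightarrow> bool" where
  "bip_embeds S T EH A B EG \<longleftrightarrow>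
     (\<exists>f g. bij_betw f S A \<and> bij_betw g T B \<and> (\<forall>(s, t) \<in> EH. (f s, g t) \<in> EG))"

end

theory Submission
  imports Defs "HOL-Probability.Probability"
begin


lemma hall:
  fixes X :: "'a set" and R :: "'a \<Rightarrow> 'b set"
  assumes "finite X" "\<forall>x\<in>X. finite (R x)"
    "\<forall>Y\<subseteq>X. card Y \<le> card (\<Union>(R ` Y))"
  shows "\<exists>h. inj_on h X \<and> (\<forall>x\<in>X. h x \<in> R x)"
  using assms
proof (induction "card X" arbitrary: X R rule: less_induct)
  case less
  note fin = less.prems(1) and finR = less.prems(2) and H = less.prems(3)
  show ?case
  proof (cases "X = {}")
    case True then show ?thesis by auto
  next
    case Xne: False
    show ?thesis
    proof (cases "\<exists>Y. Y \<subseteq> X \<and> Y \<noteq> {} \<and> Y \<noteq> X \<and> card Y = card (\<Union>(R ` Y))")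
      case noncrit: False
      obtain x where x: "x \<in> X" using Xne by auto
      have "card {x} \<le> card (\<Union>(R ` {x}))" using H x by blast
      hence "card {x} \<le> card (R x)" by simp
      hence "R x \<noteq> {}" by auto
      then obtain y where y: "y \<in> R x" by auto
      define X' where "X' = X - {x}"
      define R' where "R' = (\<lambda>z. R z - {y})"
      have "card X' < card X" using x fin by (metis X'_def card_Diff1_less)
      moreover have "finite X'" using fin by (simp add: X'_def)
      moreover have "\<forall>x\<in>X'. finite (R' x)" using finR by (auto simp: X'_def R'_def)
      moreover have "\<forall>Y\<subseteq>X'. card Y \<le> card (\<Union>(R' ` Y))"
      proof (intro allI impI)
        fix Y assume Y: "Y \<subseteq> X'"
        show "card Y \<le> card (\<Union>(R' ` Y))"
        proof (cases "Y = {}")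
          case True then show ?thesis by simp
        next
          case False
          have YX: "Y \<subseteq> X" "Y \<noteq> X" using Y x by (auto simp: X'_def)
          have "card Y \<le> card (\<Union>(R ` Y))" using H YX by auto
          hence lt: "card Y < card (\<Union>(R ` Y))" using noncrit YX False by (metis le_neq_implies_less)
          have eq: "\<Union>(R' ` Y) = \<Union>(R ` Y) - {y}" by (auto simp: R'_def)
          have fU: "finite (\<Union>(R ` Y))" using finR YX fin by (meson finite_UN_I finite_subset subsetD)
          have "card (\<Union>(R ` Y)) \<le> card (\<Union>(R' ` Y)) + 1"
            unfolding eq using fU by (cases "y \<in> \<Union>(R ` Y)") (auto simp: card_Diff_singleton_if)
          then show ?thesis using lt by linarith
        qed
      qed
      ultimately obtain h' where h': "inj_on h' X'" "\<forall>z\<in>X'. h' z \<in> R' z"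
        using less.hyps by blast
      define h where "h = h'(x := y)"
      have "inj_on h X"
      proof -
        have "X = insert x X'" using x by (auto simp: X'_def)
        moreover have "inj_on h X'" using h' by (auto simp: h_def X'_def inj_on_def)
        moreover have "h x \<notin> h ` X'" using h' by (auto simp: h_def X'_def R'_def)
        moreover have "x \<notin> X'" by (simp add: X'_def)
        ultimately show ?thesis by simp
      qed
      moreover have "\<forall>z\<in>X. h z \<in> R z" using h' y by (auto simp: h_def X'_def R'_def)
      ultimately show ?thesis by blast
    next
      case True
      then obtain Y where Y: "Y \<subseteq> X" "Y \<noteq> {}" "Y \<noteq> X" "card Y = card (\<Union>(R ` Y))" by blast
      define N where "N = \<Union>(R ` Y)"
      have finY: "finite Y" using Y fin finite_subset by blast
      have fN: "finite N" using finR Y finY by (auto simp: N_def)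
      have "card Y < card X" using Y fin by (meson psubsetI psubset_card_mono)
      moreover have "\<forall>Z\<subseteq>Y. card Z \<le> card (\<Union>(R ` Z))" using H Y by auto
      ultimately obtain h1 where h1: "inj_on h1 Y" "\<forall>z\<in>Y. h1 z \<in> R z"
        using less.hyps[of Y R] finY finR Y by blast
      define X2 where "X2 = X - Y"
      define R2 where "R2 = (\<lambda>z. R z - N)"
      have "card Y > 0" using Y finY by auto
      moreover have "card X2 = card X - card Y" using Y finY by (simp add: X2_def card_Diff_subset)
      moreover have "card X > 0" using fin Xne by auto
      ultimately have "card X2 < card X" by linarith
      moreover have "finite X2" using fin by (simp add: X2_def)
      moreover have "\<forall>x\<in>X2. finite (R2 x)" using finR by (auto simp: X2_def R2_def)
      moreover have "\<forall>Z\<subseteq>X2. card Z \<le> card (\<Union>(R2 ` Z))"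
      proof (intro allI impI)
        fix Z assume Z: "Z \<subseteq> X2"
        have ZY: "Z \<union> Y \<subseteq> X" using Z Y by (auto simp: X2_def)
        have d: "Z \<inter> Y = {}" using Z by (auto simp: X2_def)
        have finZ: "finite Z" using Z fin by (metis \<open>finite X2\<close> finite_subset)
        have "card Z + card Y = card (Z \<union> Y)" using d finZ finY by (simp add: card_Un_disjoint)
        also have "\<dots> \<le> card (\<Union>(R ` (Z \<union> Y)))" using H ZY by blast
        also have "\<Union>(R ` (Z \<union> Y)) = \<Union>(R2 ` Z) \<union> N" by (auto simp: R2_def N_def)
        also have "card \<dots> \<le> card (\<Union>(R2 ` Z)) + card N" by (rule card_Un_le)
        finally show "card Z \<le> card (\<Union>(R2 ` Z))" using Y(4) by (simp add: N_def)
      qed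
      ultimately obtain h2 where h2: "inj_on h2 X2" "\<forall>z\<in>X2. h2 z \<in> R2 z"
        using less.hyps by blast
      define h where "h = (\<lambda>z. if z \<in> Y then h1 z else h2 z)"
      have "inj_on h X"
        unfolding inj_on_def
      proof (intro ballI impI)
        fix a b assume ab: "a \<in> X" "b \<in> X" "h a = h b"
        show "a = b"
        proof (cases "a \<in> Y"; cases "b \<in> Y")
          assume "a \<in> Y" "b \<in> Y" then show ?thesis using ab h1 by (auto simp: h_def inj_on_def)
        next
          assume "a \<in> Y" "b \<notin> Y"
          have "h a \<in> N" using h1 \<open>a \<in> Y\<close> by (auto simp: h_def N_def)
          moreover have "h b \<notin> N" using h2 \<open>b \<notin> Y\<close> ab(2) by (simp add: h_def R2_def X2_def)
          ultimately show ?thesis using ab by simp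
        next
          assume "a \<notin> Y" "b \<in> Y"
          have "h b \<in> N" using h1 \<open>b \<in> Y\<close> by (auto simp: h_def N_def)
          moreover have "h a \<notin> N" using h2 \<open>a \<notin> Y\<close> ab(1) by (simp add: h_def R2_def X2_def)
          ultimately show ?thesis using ab by simp
        next
          assume "a \<notin> Y" "b \<notin> Y" then show ?thesis using ab h2 by (auto simp: h_def inj_on_def X2_def)
        qed
      qed
      moreover have "\<forall>z\<in>X. h z \<in> R z" using h1 h2 by (auto simp: h_def X2_def R2_def)
      ultimately show ?thesis by blast
    qed
  qed
qed



lemma balanced_order:
  fixes e :: "'a \<Rightarrow> nat" and X :: "'a set" and off :: int
  assumes "finite X" "\<forall>x\<in>X. e x \<le> D" "-1 \<le> off" "off \<le> int D"
    "off + (\<Sum>x\<in>X. int (e x) - 1) = 0"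
  shows "\<exists>xs. distinct xs \<and> set xs = X \<and>
     (\<forall>k\<le>length xs. -1 \<le> off + (\<Sum>i<k. int (e (xs!i)) - 1) \<and> off + (\<Sum>i<k. int (e (xs!i)) - 1) \<le> int D)"
  using assms
proof (induction "card X" arbitrary: X off rule: less_induct)
  case less
  show ?case
  proof (cases "X = {}")
    case True
    then show ?thesis using less.prems by (intro exI[of _ "[]"]) auto
  next
    case Xne: False
    have "\<exists>x\<in>X. -1 \<le> off + int (e x) - 1 \<and> off + int (e x) - 1 \<le> int D"
    proof (cases "off \<ge> 0")
      case True
      have "\<exists>x\<in>X. e x \<le> 1"
      proof (rule ccontr)
        assume "\<not> ?thesis"
        hence "\<forall>x\<in>X. int (e x) - 1 \<ge> 1" by auto
        hence "(\<Sum>x\<in>X. int (e x) - 1) \<ge> (\<Sum>x\<in>X. 1)" by (intro sum_mono) auto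
        moreover have "(\<Sum>x\<in>X. (1::int)) > 0" using Xne less.prems(1) by auto
        ultimately show False using less.prems(5) True by linarith
      qed
      then obtain x where "x \<in> X" "e x \<le> 1" by blast
      then show ?thesis using True less.prems(4) by (intro bexI[of _ x]) auto
    next
      case False
      hence o1: "off = -1" using less.prems(3) by auto
      have "\<exists>x\<in>X. e x \<ge> 2"
      proof (rule ccontr)
        assume "\<not> ?thesis"
        hence "\<forall>x\<in>X. int (e x) - 1 \<le> 0" by auto
        hence "(\<Sum>x\<in>X. int (e x) - 1) \<le> 0" by (intro sum_nonpos) auto
        then show False using less.prems(5) o1 by linarith
      qed
      then obtain x where "x \<in> X" "e x \<ge> 2" by blast
      then show ?thesis using o1 less.prems(2) by (intro bexI[of _ x]) auto
    qed
    then obtain x where x: "x \<in> X" "-1 \<le> off + int (e x) - 1" "off + int (e x) - 1 \<le> int D" by blast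
    define X' where "X' = X - {x}"
    define off' where "off' = off + int (e x) - 1"
    have "card X' < card X" using x less.prems(1) by (metis X'_def card_Diff1_less)
    moreover have "off' + (\<Sum>x\<in>X'. int (e x) - 1) = 0"
      using less.prems(5) less.prems(1) x(1) unfolding off'_def X'_def
      by (simp add: sum.remove)
    ultimately obtain xs' where xs': "distinct xs'" "set xs' = X'"
      "\<forall>k\<le>length xs'. -1 \<le> off' + (\<Sum>i<k. int (e (xs'!i)) - 1) \<and> off' + (\<Sum>i<k. int (e (xs'!i)) - 1) \<le> int D"
      using less.hyps[of X' off'] less.prems x by (auto simp: X'_def off'_def)
    have "distinct (x # xs')" using xs' by (simp add: X'_def)
    moreover have "set (x # xs') = X" using xs' x by (auto simp: X'_def)
    moreover have "\<forall>k\<le>length (x#xs'). -1 \<le> off + (\<Sum>i<k. int (e ((x#xs')!i)) - 1) \<and> off + (\<Sum>i<k. int (e ((x#xs')!i)) - 1) \<le> int D"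
    proof (intro allI impI)
      fix k assume k: "k \<le> length (x#xs')"
      show "-1 \<le> off + (\<Sum>i<k. int (e ((x#xs')!i)) - 1) \<and> off + (\<Sum>i<k. int (e ((x#xs')!i)) - 1) \<le> int D"
      proof (cases k)
        case 0 then show ?thesis using less.prems by simp
      next
        case (Suc j)
        have "(\<Sum>i<k. int (e ((x#xs')!i)) - 1) = int (e x) - 1 + (\<Sum>i<j. int (e (xs'!i)) - 1)"
          unfolding Suc by (subst sum.lessThan_Suc_shift) simp
        moreover have "j \<le> length xs'" using k Suc by simp
        ultimately show ?thesis using xs'(3) unfolding off'_def by force
      qed
    qed
    ultimately show ?thesis by blast
  qed
qed


lemma mod_shift_inj:
  fixes a b K s :: nat
  assumes "a < s" "b < s" "(a + K) mod s = (b + K) mod s"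
  shows "a = b"
proof -
  have key: "x = y" if "x \<le> y" "x < s" "y < s" "(x + K) mod s = (y + K) mod s" for x y :: nat
  proof -
    have "s dvd (y + K) - (x + K)" using that by (metis add_le_mono1 mod_eq_dvd_iff_nat)
    hence "s dvd y - x" by simp
    moreover have "y - x < s" using that by linarith
    ultimately show ?thesis using that by (metis diff_is_0_eq dvd_imp_le le_antisym not_gr_zero not_le)
  qed
  show ?thesis using key[of a b] key[of b a] assms by (metis nat_le_linear)
qed
lemma decomp:
  fixes g :: "nat \<Rightarrow> nat"
  assumes "\<forall>t<q. g t \<le> g (Suc t)"
  shows "(\<Sum>t<q. sum h {g t..<g (Suc t)}) = sum h {g 0..<g q} \<and> g 0 \<le> g q"
  using assms
proof (induction q)
  case 0 then show ?case by (simp add: atLeastLessThan_empty)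
next
  case (Suc q)
  then have IH: "(\<Sum>t<q. sum h {g t..<g (Suc t)}) = sum h {g 0..<g q}" "g 0 \<le> g q" by auto
  have "g q \<le> g (Suc q)" using Suc.prems by auto
  then show ?case using IH by (simp add: sum.atLeastLessThan_concat)
qed


definition gq :: "nat \<Rightarrow> nat \<Rightarrow> nat \<Rightarrow> nat" where
  "gq n m t = (if t < n div m then t*m else n)"
definition colq :: "nat \<Rightarrow> nat \<Rightarrow> nat \<Rightarrow> nat" where
  "colq n m i = min (i div m) (n div m - 1)"
definition szq :: "nat \<Rightarrow> nat \<Rightarrow> nat \<Rightarrow> nat" where
  "szq n m t = gq n m (Suc t) - gq n m t"
definition piq :: "nat \<Rightarrow> nat \<Rightarrow> (nat \<Rightarrow> nat) \<Rightarrow> nat \<Rightarrow> nat" where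
  "piq n m k i = gq n m (colq n m i) + ((i - gq n m (colq n m i) + k (colq n m i)) mod szq n m (colq n m i))"

context
  fixes n m :: nat
  assumes m1: "1 \<le> m" and mn: "m \<le> n"
begin

lemma q_pos: "1 \<le> n div m"
  using m1 mn by (metis div_le_mono div_self not_one_le_zero)

lemma qm: "(n div m) * m \<le> n" "n < (n div m + 1) * m"
proof -
  have e: "n = (n div m) * m + n mod m" by simp
  have "n mod m < m" using m1 by simp
  show "(n div m) * m \<le> n" using e by linarith
  have "(n div m + 1) * m = (n div m) * m + m" by simp
  then show "n < (n div m + 1) * m" using e \<open>n mod m < m\<close> by linarith
qed

lemma g0: "gq n m 0 = 0" using q_pos by (simp add: gq_def)
lemma gqq: "gq n m (n div m) = n" by (simp add: gq_def)

lemma g_lo: "t < n div m \<Longrightarrow> gq n m t + m \<le> gq n m (Suc t)"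
proof -
  assume t: "t < n div m"
  show ?thesis
  proof (cases "Suc t < n div m")
    case True then show ?thesis using t by (simp add: gq_def)
  next
    case False
    then have "Suc t = n div m" using t by simp
    then have "gq n m (Suc t) = n" by (simp add: gq_def)
    moreover have "t * m + m = (n div m) * m" using \<open>Suc t = n div m\<close> by (metis add.commute mult_Suc)
    moreover have "gq n m t = t * m" using t by (simp add: gq_def)
    ultimately show ?thesis using qm(1) by linarith
  qed
qed

lemma g_hi: "t < n div m \<Longrightarrow> gq n m (Suc t) < gq n m t + 2 * m"
proof -
  assume t: "t < n div m"
  show ?thesis
  proof (cases "Suc t < n div m")
    case True then show ?thesis using t m1 by (simp add: gq_def)
  next
    case False
    then have "Suc t = n div m" using t by simp
    then have "gq n m (Suc t) = n" by (simp add: gq_def)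
    moreover have "(n div m + 1) * m = (t + 2) * m" using \<open>Suc t = n div m\<close> by simp
    moreover have "(t + 2) * m = t * m + 2 * m" by (simp add: algebra_simps)
    moreover have "gq n m t = t * m" using t by (simp add: gq_def)
    ultimately show ?thesis using qm(2) by linarith
  qed
qed

lemma g_le_n: "gq n m t \<le> n"
proof (cases "t < n div m")
  case True
  then have "t * m \<le> (n div m) * m" by simp
  then have "t * m \<le> n" using qm(1) by linarith
  then show ?thesis using True by (simp add: gq_def)
qed (simp add: gq_def)

lemma sz_bounds: "t < n div m \<Longrightarrow> m \<le> szq n m t \<and> szq n m t < 2 * m"
  using g_lo[of t] g_hi[of t] unfolding szq_def by linarith

lemma div_eqI': "t * m \<le> i \<Longrightarrow> i < t * m + m \<Longrightarrow> i div m = t"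
  by (simp add: div_nat_eqI mult.commute)

lemma le_div': "t * m \<le> i \<Longrightarrow> t \<le> i div m"
  using m1 by (metis div_le_mono div_mult_self_is_m less_le_trans zero_less_one)

lemma colI: "t < n div m \<Longrightarrow> gq n m t \<le> i \<Longrightarrow> i < gq n m (Suc t) \<Longrightarrow> colq n m i = t"
proof -
  assume t: "t < n div m" and lo: "gq n m t \<le> i" and hi: "i < gq n m (Suc t)"
  have gt: "gq n m t = t * m" using t by (simp add: gq_def)
  show ?thesis
  proof (cases "Suc t < n div m")
    case True
    then have "gq n m (Suc t) = t * m + m" by (simp add: gq_def)
    then have "i div m = t" using lo hi gt div_eqI' by simp
    then show ?thesis using True by (simp add: colq_def)
  next
    case False
    then have "n div m - 1 = t" using t by simp
    moreover have "t \<le> i div m" using le_div' lo gt by simp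
    ultimately show ?thesis by (simp add: colq_def)
  qed
qed

lemma colD: "i < n \<Longrightarrow> colq n m i < n div m \<and> gq n m (colq n m i) \<le> i \<and> i < gq n m (Suc (colq n m i))"
proof -
  assume i: "i < n"
  have q1: "1 \<le> n div m" by (rule q_pos)
  have dm: "(i div m) * m \<le> i" "i < (i div m) * m + m"
    using m1 by (simp_all add: div_times_less_eq_dividend add.commute dividend_less_div_times)
  show ?thesis
  proof (cases "i div m \<le> n div m - 1")
    case True
    then have c: "colq n m i = i div m" by (simp add: colq_def)
    have lt: "i div m < n div m" using True q1 by linarith
    have "gq n m (i div m) = (i div m) * m" using lt by (simp add: gq_def)
    moreover have "gq n m (i div m) + m \<le> gq n m (Suc (i div m))" using g_lo lt by blast
    ultimately show ?thesis using c lt dm by simp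
  next
    case False
    then have c: "colq n m i = n div m - 1" by (simp add: colq_def)
    have "(n div m - 1) * m \<le> (i div m) * m" using False by simp
    then have "(n div m - 1) * m \<le> i" using div_times_less_eq_dividend[of i m] by linarith
    moreover have "gq n m (n div m - 1) = (n div m - 1) * m" using q1 by (simp add: gq_def)
    moreover have "Suc (n div m - 1) = n div m" using q1 by simp
    ultimately show ?thesis using c dm i q1 gqq by auto
  qed
qed

lemma sz_pos: "t < n div m \<Longrightarrow> 0 < szq n m t"
  using sz_bounds[of t] m1 by linarith

lemma pi_col: "t < n div m \<Longrightarrow> gq n m t \<le> i \<Longrightarrow> i < gq n m (Suc t) \<Longrightarrow>
  piq n m k i = gq n m t + ((i - gq n m t + k t) mod szq n m t)"
  using colI by (simp add: piq_def)

lemma pi_in_col: "t < n div m \<Longrightarrow> gq n m t \<le> gq n m t + (x mod szq n m t) \<and> gq n m t + (x mod szq n m t) < gq n m (Suc t)"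
  using sz_pos[of t] g_lo[of t] by (simp add: szq_def) (metis add.commute le_add_diff_inverse2 le_add1 le_trans mod_less_divisor nat_add_left_cancel_less zero_less_diff)

lemma pi_bij: "bij_betw (piq n m k) {..<n} {..<n}"
proof -
  have maps: "piq n m k i < n" if "i < n" for i
  proof -
    let ?c = "colq n m i"
    have "?c < n div m" using colD that by blast
    then show ?thesis using pi_in_col[of ?c] g_le_n[of "Suc ?c"] by (simp add: piq_def) (meson order_less_le_trans)
  qed
  have inj: "inj_on (piq n m k) {..<n}"
  proof (rule inj_onI)
    fix i j assume i: "i \<in> {..<n}" and j: "j \<in> {..<n}" and eq: "piq n m k i = piq n m k j"
    let ?ci = "colq n m i" and ?cj = "colq n m j"
    have ci: "?ci < n div m" "gq n m ?ci \<le> i" "i < gq n m (Suc ?ci)" using colD i by auto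
    have cj: "?cj < n div m" "gq n m ?cj \<le> j" "j < gq n m (Suc ?cj)" using colD j by auto
    have "colq n m (piq n m k i) = ?ci"
      using colI[OF ci(1)] pi_in_col[OF ci(1)] by (simp add: piq_def)
    moreover have "colq n m (piq n m k j) = ?cj"
      using colI[OF cj(1)] pi_in_col[OF cj(1)] by (simp add: piq_def)
    ultimately have cc: "?ci = ?cj" using eq by simp
    let ?c = ?ci
    have "(i - gq n m ?c + k ?c) mod szq n m ?c = (j - gq n m ?c + k ?c) mod szq n m ?c"
      using eq cc by (simp add: piq_def)
    moreover have "i - gq n m ?c < szq n m ?c" "j - gq n m ?c < szq n m ?c"
      using ci cj cc by (auto simp: szq_def)
    ultimately have "i - gq n m ?c = j - gq n m ?c" using mod_shift_inj by blast
    moreover have "gq n m ?c \<le> j" using cj(2) cc by simp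
    ultimately show "i = j" using ci(2) by linarith
  qed
  have "piq n m k ` {..<n} = {..<n}"
    using maps inj by (intro endo_inj_surj) auto
  then show ?thesis using inj by (simp add: bij_betw_def)
qed

lemma sum_cols: "(\<Sum>i<n. h i) = (\<Sum>t<n div m. \<Sum>i\<in>{gq n m t..<gq n m (Suc t)}. h i)"
proof -
  have "\<forall>t<n div m. gq n m t \<le> gq n m (Suc t)" using g_lo by (meson le_add1 le_trans)
  from decomp[OF this, of h] show ?thesis using g0 gqq by (simp add: lessThan_atLeast0)
qed

end


lemma card_ind: "finite A \<Longrightarrow> (\<Sum>i\<in>A. if i \<in> U then 1 else 0::nat) = card (A \<inter> U)"
  by (simp add: sum.If_cases Collect_mem_eq)

lemma sum_if_const: "finite A \<Longrightarrow> (\<Sum>a\<in>A. if P a then (x::real) else 0) = x * card {a\<in>A. P a}"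
  by (simp add: sum.If_cases) (simp add: Int_def conj_commute)

lemma core:
  fixes n m :: nat and e :: "nat \<Rightarrow> nat" and Dr \<epsilon> :: real and F :: "nat set set"
  assumes m1: "1 \<le> m" and mn: "m \<le> n"
  and eps: "0 < \<epsilon>" "\<epsilon> < 1/2"
  and Dr: "0 \<le> Dr" "Dr \<le> \<epsilon> * m"
  and P: "\<forall>k\<le>n. \<bar>real (\<Sum>i<k. e i) - real k\<bar> \<le> Dr"
  and sumn: "(\<Sum>i<n. e i) = n"
  and F: "finite F" "card F \<le> n" "\<forall>U\<in>F. U \<subseteq> {..<n} \<and> real (card U) \<le> (1/2 - \<epsilon>) * n"
  and expb: "real n * exp (-2 * \<epsilon>^2 * n / (3 * m)) < 1"
  shows "\<exists>\<pi>. bij_betw \<pi> {..<n} {..<n} \<and> (\<forall>U\<in>F. (\<Sum>i<n. if \<pi> i \<in> U then real (e i) else 0) \<le> (1/2 + \<epsilon>) * n)"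
proof -
  define q where "q = n div m"
  define g where "g = gq n m"
  define sz where "sz = szq n m"
  define M where "M = Pi_pmf {..<q} 0 (\<lambda>t. pmf_of_set {..<sz t})"
  define Y where "Y U t a = (\<Sum>i\<in>{g t..<g (Suc t)}. if g t + ((i - g t + a) mod sz t) \<in> U then real (e i) else 0)" for U t a
  define c where "c t = (\<Sum>i\<in>{g t..<g (Suc t)}. real (e i))" for t
  define bad where "bad U = {k. (1/2+\<epsilon>)*n < (\<Sum>i<n. if piq n m k i \<in> U then real (e i) else 0)}" for U

  have sumY: "(\<Sum>i<n. if piq n m k i \<in> U then real (e i) else 0) = (\<Sum>t<q. Y U t (k t))" for k U
    unfolding sum_cols[OF m1 mn] q_def Y_def g_def sz_def
    by (intro sum.cong refl) (simp add: pi_col[OF m1 mn])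
  have sz_m: "t < q \<Longrightarrow> m \<le> sz t \<and> sz t < 2 * m" for t
    using sz_bounds[OF m1 mn] by (simp add: q_def sz_def)
  have glo: "t < q \<Longrightarrow> g t \<le> g (Suc t)" for t
    using g_lo[OF m1 mn] by (simp add: q_def g_def) (meson le_add1 le_trans)
  have gn: "g t \<le> n" for t using g_le_n[OF m1 mn] by (simp add: g_def)
  have c_le: "t < q \<Longrightarrow> c t \<le> sz t + 2 * Dr" for t
  proof -
    assume t: "t < q"
    have split: "(\<Sum>i<g (Suc t). e i) = (\<Sum>i<g t. e i) + (\<Sum>i\<in>{g t..<g (Suc t)}. e i)"
      using glo[OF t] by (simp add: lessThan_atLeast0 sum.atLeastLessThan_concat)
    have "c t = real (\<Sum>i\<in>{g t..<g (Suc t)}. e i)" by (simp add: c_def)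
    moreover have "\<bar>real (\<Sum>i<g (Suc t). e i) - real (g (Suc t))\<bar> \<le> Dr" using P gn by blast
    moreover have "\<bar>real (\<Sum>i<g t. e i) - real (g t)\<bar> \<le> Dr" using P gn by blast
    moreover have "real (sz t) = real (g (Suc t)) - real (g t)" using glo[OF t] by (simp add: sz_def g_def szq_def)
    ultimately show ?thesis using split by (simp add: abs_le_iff)
  qed
  have c_nonneg: "0 \<le> c t" for t by (simp add: c_def sum_nonneg)
  have Y_bounds: "0 \<le> Y U t a \<and> Y U t a \<le> c t" for U t a
    unfolding Y_def c_def by (auto intro!: sum_nonneg sum_mono)
  have c_sum: "(\<Sum>t<q. c t) = n"
    using sum_cols[OF m1 mn, of "\<lambda>i. real (e i)"] sumn unfolding c_def q_def g_def
    by (metis of_nat_sum)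
  have c3: "t < q \<Longrightarrow> c t \<le> 3 * m" for t
  proof -
    assume t: "t < q"
    have "real (sz t) < 2 * m" using sz_m[OF t] by linarith
    moreover have "\<epsilon> * m \<le> 1/2 * m" using eps by (intro mult_right_mono) auto
    then have "2 * Dr \<le> m" using Dr by linarith
    ultimately show ?thesis using c_le[OF t] by linarith
  qed
  have csq: "(\<Sum>t<q. (c t - 0)^2) \<le> 3 * m * n"
  proof -
    have "(\<Sum>t<q. (c t - 0)^2) \<le> (\<Sum>t<q. 3 * m * c t)"
      by (intro sum_mono) (use c3 c_nonneg in \<open>simp add: power2_eq_square mult_right_mono\<close>)
    also have "\<dots> = 3 * m * (\<Sum>t<q. c t)" by (simp add: sum_distrib_left)
    also have "\<dots> = 3 * m * n" using c_sum by simp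
    finally show ?thesis .
  qed
  have n_pos: "0 < n" using m1 mn by linarith
  have csq_pos: "0 < (\<Sum>t<q. (c t - 0)^2)"
  proof (rule ccontr)
    assume "\<not> ?thesis"
    hence "(\<Sum>t<q. (c t - 0)^2) = 0" by (simp add: sum_nonneg leD) (meson not_less sum_nonneg zero_le_power2 antisym)
    hence "\<forall>t\<in>{..<q}. (c t - 0)^2 = 0" by (subst (asm) sum_nonneg_eq_0_iff) auto
    hence "(\<Sum>t<q. c t) = 0" by simp
    then show False using c_sum n_pos by simp
  qed

  have bad_prob: "measure_pmf.prob M (bad U) \<le> exp (-2 * \<epsilon>^2 * n / (3 * m))" if U: "U \<in> F" for U
  proof -
    have UF: "U \<subseteq> {..<n}" "real (card U) \<le> (1/2 - \<epsilon>) * n" using F(3) U by auto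
    define X where "X t k = Y U t (k t)" for t k
    have ps: "prob_space (measure_pmf M)" by (rule measure_pmf.prob_space_axioms)
    have indep: "prob_space.indep_vars (measure_pmf M) (\<lambda>_. borel) X {..<q}"
      unfolding X_def M_def
      by (intro prob_space.indep_vars_compose2[OF _ indep_vars_Pi_pmf]) (auto simp: measure_pmf.prob_space_axioms)
    have H: "Hoeffding_ineq (measure_pmf M) {..<q} X (\<lambda>_. 0) c"
      unfolding Hoeffding_ineq_def indep_interval_bounded_random_variables_def
        indep_interval_bounded_random_variables_axioms_def
      using ps indep Y_bounds by (auto simp: X_def)
    have EX: "measure_pmf.expectation M (X t) \<le> (1 + 2*Dr/m) * card (U \<inter> {g t..<g (Suc t)})" if t: "t < q" for t
    proof -
      have szpos: "0 < sz t" using sz_m[OF t] m1 by linarith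
      let ?K = "card (U \<inter> {g t..<g (Suc t)})"
      have "measure_pmf.expectation M (X t) = measure_pmf.expectation (map_pmf (\<lambda>k. k t) M) (Y U t)"
        by (simp add: X_def[abs_def])
      also have "map_pmf (\<lambda>k. k t) M = pmf_of_set {..<sz t}" using t by (simp add: M_def Pi_pmf_component)
      also have "measure_pmf.expectation (pmf_of_set {..<sz t}) (Y U t) = (\<Sum>a<sz t. Y U t a) / sz t"
        using szpos by (subst integral_pmf_of_set) auto
      also have "(\<Sum>a<sz t. Y U t a) \<le> c t * ?K"
      proof -
        have "(\<Sum>a<sz t. Y U t a) = (\<Sum>i\<in>{g t..<g (Suc t)}. \<Sum>a<sz t. if g t + ((i - g t + a) mod sz t) \<in> U then real (e i) else 0)"
          unfolding Y_def by (rule sum.swap)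
        also have "\<dots> \<le> (\<Sum>i\<in>{g t..<g (Suc t)}. real (e i) * ?K)"
        proof (intro sum_mono)
          fix i assume i: "i \<in> {g t..<g (Suc t)}"
          have eq: "(\<Sum>a<sz t. if g t + ((i - g t + a) mod sz t) \<in> U then real (e i) else 0) = real (e i) * card {a\<in>{..<sz t}. g t + ((i - g t + a) mod sz t) \<in> U}"
            by (rule sum_if_const) simp
          have "card {a\<in>{..<sz t}. g t + ((i - g t + a) mod sz t) \<in> U} \<le> ?K"
          proof (rule card_inj_on_le[where f="\<lambda>a. g t + ((i - g t + a) mod sz t)"])
            show "inj_on (\<lambda>a. g t + ((i - g t + a) mod sz t)) {a\<in>{..<sz t}. g t + ((i - g t + a) mod sz t) \<in> U}"
            proof (rule inj_onI)
              fix a b assume a: "a \<in> {a\<in>{..<sz t}. g t + ((i - g t + a) mod sz t) \<in> U}" and b: "b \<in> {a\<in>{..<sz t}. g t + ((i - g t + a) mod sz t) \<in> U}"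
                and ab: "g t + ((i - g t + a) mod sz t) = g t + ((i - g t + b) mod sz t)"
              have "(a + (i - g t)) mod sz t = (b + (i - g t)) mod sz t" using ab by (simp add: add.commute)
              then show "a = b" using a b mod_shift_inj by blast
            qed
            show "(\<lambda>a. g t + ((i - g t + a) mod sz t)) ` {a\<in>{..<sz t}. g t + ((i - g t + a) mod sz t) \<in> U} \<subseteq> U \<inter> {g t..<g (Suc t)}"
              using pi_in_col[OF m1 mn, of t] t by (auto simp: g_def sz_def q_def)
            show "finite (U \<inter> {g t..<g (Suc t)})" by simp
          qed
          then show "(\<Sum>a<sz t. if g t + ((i - g t + a) mod sz t) \<in> U then real (e i) else 0) \<le> real (e i) * ?K"
            unfolding eq by (intro mult_left_mono) auto
        qed
        also have "\<dots> = c t * ?K" by (simp add: c_def sum_distrib_right)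
        finally show ?thesis .
      qed
      then have "(\<Sum>a<sz t. Y U t a) / sz t \<le> c t * ?K / sz t" by (intro divide_right_mono) auto
      also have "c t * ?K / sz t \<le> (sz t + 2*Dr) * ?K / sz t"
        using c_le[OF t] by (intro divide_right_mono mult_right_mono) auto
      also have "\<dots> = ?K + 2*Dr*?K/sz t" using szpos by (simp add: field_simps)
      also have "2*Dr*?K/sz t \<le> 2*Dr*?K/m"
        using Dr sz_m[OF t] m1 by (intro divide_left_mono) auto
      also have "?K + 2*Dr*?K/m = (1 + 2*Dr/m) * ?K" using m1 by (simp add: field_simps)
      finally show ?thesis by simp
    qed
    have cardU: "(\<Sum>t<q. card (U \<inter> {g t..<g (Suc t)})) = card U"
    proof -
      have "card U = (\<Sum>i<n. if i \<in> U then 1 else 0::nat)"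
        using card_ind[of "{..<n}" U] UF(1) by (metis finite_lessThan inf.absorb_iff2)
      also have "\<dots> = (\<Sum>t<q. (\<Sum>i\<in>{g t..<g (Suc t)}. if i \<in> U then 1 else 0::nat))"
        unfolding sum_cols[OF m1 mn] q_def g_def ..
      also have "\<dots> = (\<Sum>t<q. card (U \<inter> {g t..<g (Suc t)}))"
        by (intro sum.cong refl) (simp add: card_ind Int_commute)
      finally show ?thesis by simp
    qed
    have mu: "(\<Sum>t<q. measure_pmf.expectation M (X t)) \<le> n/2"
    proof -
      have "(\<Sum>t<q. measure_pmf.expectation M (X t)) \<le> (\<Sum>t<q. (1 + 2*Dr/m) * card (U \<inter> {g t..<g (Suc t)}))"
        by (intro sum_mono EX) auto
      also have "\<dots> = (1 + 2*Dr/m) * card U"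
        using cardU by (simp add: sum_distrib_left[symmetric] of_nat_sum[symmetric])
      also have "\<dots> \<le> (1 + 2*\<epsilon>) * ((1/2 - \<epsilon>) * n)"
      proof (intro mult_mono)
        show "1 + 2*Dr/m \<le> 1 + 2*\<epsilon>" using Dr m1 by (simp add: divide_le_eq mult.commute)
      qed (use UF Dr m1 eps in auto)
      also have "\<dots> \<le> n/2"
      proof -
        have "(1 + 2*\<epsilon>) * ((1/2 - \<epsilon>) * n) = n/2 - 2*\<epsilon>^2*n" by (simp add: algebra_simps power2_eq_square)
        moreover have "0 \<le> 2*\<epsilon>^2*n" by simp
        ultimately show ?thesis by linarith
      qed
      finally show ?thesis .
    qed
    have hf: "measure_pmf.prob M {k \<in> space (measure_pmf M). (\<Sum>t<q. measure_pmf.expectation M (X t)) + \<epsilon>*n \<le> (\<Sum>t<q. X t k)}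
      \<le> exp (-2 * (\<epsilon>*n)^2 / (\<Sum>t<q. (c t - 0)^2))"
      using Hoeffding_ineq.Hoeffding_ineq_ge[OF H, of "\<epsilon>*n"] csq_pos eps by simp
    have sub: "bad U \<subseteq> {k \<in> space (measure_pmf M). (\<Sum>t<q. measure_pmf.expectation M (X t)) + \<epsilon>*n \<le> (\<Sum>t<q. X t k)}"
    proof
      fix k assume "k \<in> bad U"
      then have "(1/2+\<epsilon>)*n < (\<Sum>t<q. X t k)" by (simp add: bad_def sumY X_def)
      then show "k \<in> {k \<in> space (measure_pmf M). (\<Sum>t<q. measure_pmf.expectation M (X t)) + \<epsilon>*n \<le> (\<Sum>t<q. X t k)}"
        using mu by (simp add: algebra_simps)
    qed
    have ex: "exp (-2 * (\<epsilon>*n)^2 / (\<Sum>t<q. (c t - 0)^2)) \<le> exp (-2 * \<epsilon>^2 * n / (3 * m))"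
    proof -
      have "(\<epsilon>*n)^2 / (3*m*n) \<le> (\<epsilon>*n)^2 / (\<Sum>t<q. (c t - 0)^2)"
        using csq csq_pos by (intro divide_left_mono) auto
      moreover have "(\<epsilon>*n)^2 / (3*m*n) = \<epsilon>^2 * n / (3 * m)" using n_pos by (simp add: power2_eq_square field_simps)
      ultimately show ?thesis by simp
    qed
    have "measure_pmf.prob M (bad U) \<le> measure_pmf.prob M {k \<in> space (measure_pmf M). (\<Sum>t<q. measure_pmf.expectation M (X t)) + \<epsilon>*n \<le> (\<Sum>t<q. X t k)}"
      using sub by (intro measure_pmf.finite_measure_mono) auto
    then show ?thesis using hf ex by linarith
  qed

  have "measure_pmf.prob M (\<Union>U\<in>F. bad U) \<le> (\<Sum>U\<in>F. measure_pmf.prob M (bad U))"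
    using F(1) by (intro measure_pmf.finite_measure_subadditive_finite) auto
  also have "\<dots> \<le> (\<Sum>U\<in>F. exp (-2 * \<epsilon>^2 * n / (3 * m)))" by (intro sum_mono bad_prob)
  also have "\<dots> = card F * exp (-2 * \<epsilon>^2 * n / (3 * m))" by simp
  also have "\<dots> \<le> n * exp (-2 * \<epsilon>^2 * n / (3 * m))" using F(2) by (intro mult_right_mono) auto
  also have "\<dots> < 1" by (rule expb)
  finally have "(\<Union>U\<in>F. bad U) \<noteq> UNIV"
    using measure_pmf.prob_space by auto
  then obtain k where k: "k \<notin> (\<Union>U\<in>F. bad U)" by blast
  show ?thesis
    using k pi_bij[OF m1 mn, of k] by (intro exI[of _ "piq n m k"]) (auto simp: bad_def not_less)
qed



lemma params:
  fixes \<epsilon> :: real and n Dm m :: nat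
  assumes eps: "0 < \<epsilon>" "\<epsilon> < 1/2" and n2: "2 \<le> n"
    and big: "4 \<le> \<epsilon>^3 * n / ln n"
    and Dm: "real Dm < \<epsilon>^4/100 * (n / ln n)"
    and m_def: "m = nat \<lfloor>\<epsilon>^2 * n / (2 * ln n)\<rfloor>"
  shows "1 \<le> m" "m \<le> n" "real Dm + 1 \<le> \<epsilon> * m" "real n * exp (-2 * \<epsilon>^2 * n / (3 * m)) < 1"
proof -
  define L where "L = ln (real n)"
  have L: "0 < L" using n2 by (simp add: L_def)
  define z where "z = \<epsilon>^2 * n / (2 * L)"
  have z0: "0 \<le> z" using L by (simp add: z_def)
  have mdef: "m = nat \<lfloor>z\<rfloor>" by (simp add: m_def z_def L_def)
  have "real m = real_of_int \<lfloor>z\<rfloor>" using z0 by (simp add: mdef)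
  then have mz: "real m \<le> z" "z - 1 < real m" by (simp_all add: of_int_floor_le)
  have zeq: "z = (\<epsilon>^3 * n / L) / (2 * \<epsilon>)" using eps by (simp add: z_def field_simps power3_eq_cube power2_eq_square)
  have "4 / (2 * \<epsilon>) \<le> z" unfolding zeq using big eps by (intro divide_right_mono) (auto simp: L_def)
  moreover have "4 / (2 * \<epsilon>) \<ge> 4" using eps by (simp add: field_simps)
  ultimately have z4: "4 \<le> z" by linarith
  show m1: "1 \<le> m" using mz z4 by linarith
  have "z \<le> n"
  proof -
    have "1/2 - (1/2)^2 \<le> ln (1 + (1/2::real))" by (rule ln_one_plus_pos_lower_bound) auto
    moreover have "ln (1 + (1/2::real)) \<le> L" using n2 by (simp add: L_def)
    ultimately have L4: "1/4 \<le> L" by (simp add: power2_eq_square)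
    have "\<epsilon>^2 < (1/2)^2" using eps by (intro power_strict_mono) auto
    then have "\<epsilon>^2 \<le> 1/4" by (simp add: power2_eq_square)
    then have "\<epsilon>^2 \<le> 2 * L" using L4 by linarith
    then have "\<epsilon>^2 * n \<le> 2 * L * n" by (simp add: mult_right_mono)
    then show ?thesis unfolding z_def using L by (simp add: divide_le_eq mult.commute)
  qed
  then show "m \<le> n" using mz by linarith
  define X where "X = \<epsilon>^3 * n / L"
  have "\<epsilon> * m > \<epsilon> * (z - 1)" using mz eps by simp
  then have em: "\<epsilon> * m > \<epsilon> * z - \<epsilon>" by (simp add: algebra_simps)
  moreover have "\<epsilon> * z = (\<epsilon>^3 * n / L) / 2" using eps by (simp add: z_def field_simps power3_eq_cube power2_eq_square)
  moreover have "real Dm < (\<epsilon>^3 * n / L) / 200"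
  proof -
    have "\<epsilon>^4/100 * (n / L) = \<epsilon> * (\<epsilon>^3 * n / L) / 100" by (simp add: field_simps power3_eq_cube power4_eq_xxxx)
    also have "\<dots> \<le> (1/2) * (\<epsilon>^3 * n / L) / 100" using eps big by (intro divide_right_mono mult_right_mono) (auto simp: L_def)
    finally show ?thesis using Dm by (simp add: L_def)
  qed
  moreover have "4 \<le> X" using big by (simp add: X_def L_def)
  ultimately show "real Dm + 1 \<le> \<epsilon> * m" using em eps unfolding X_def[symmetric] by linarith
  have mpos: "0 < real m" using m1 by simp
  have "L < 2 * \<epsilon>^2 * n / (3 * m)"
  proof -
    have "2 * \<epsilon>^2 * n / (3 * z) = 4 * L / 3" using L eps n2 by (simp add: z_def field_simps)
    moreover have "2 * \<epsilon>^2 * n / (3 * z) \<le> 2 * \<epsilon>^2 * n / (3 * m)"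
      using mz mpos eps by (intro divide_left_mono) auto
    ultimately show ?thesis using L by linarith
  qed
  then have "exp (-2 * \<epsilon>^2 * n / (3 * m)) < exp (- L)" by simp
  also have "exp (- L) = 1 / n" using n2 by (simp add: L_def exp_minus inverse_eq_divide)
  finally have "exp (-2 * \<epsilon>^2 * n / (3 * m)) < 1 / n" .
  then show "real n * exp (-2 * \<epsilon>^2 * n / (3 * m)) < 1" using n2 by (simp add: field_simps)
qed



lemma n0_exists:
  fixes \<epsilon> :: real
  assumes "0 < \<epsilon>"
  shows "\<exists>N::nat. \<forall>n::nat. n > N \<longrightarrow> 2 \<le> n \<and> 4 \<le> \<epsilon>^3 * real n / ln (real n)"
proof -
  define N where "N = nat \<lceil>64 / \<epsilon>^6\<rceil> + 2"
  have "2 \<le> n \<and> 4 \<le> \<epsilon>^3 * n / ln n" if n: "n > N" for n :: nat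
  proof -
    have n2: "2 \<le> n" using n by (simp add: N_def)
    have npos: "0 < real n" using n2 by simp
    have "64 / \<epsilon>^6 \<le> real n"
    proof -
      have "64 / \<epsilon>^6 \<le> real (nat \<lceil>64 / \<epsilon>^6\<rceil>)" by (meson of_nat_ceiling)
      moreover have "nat \<lceil>64 / \<epsilon>^6\<rceil> \<le> n" using n unfolding N_def by linarith
      then have "real (nat \<lceil>64 / \<epsilon>^6\<rceil>) \<le> real n" by (simp only: of_nat_le_iff)
      ultimately show ?thesis by (meson order_trans of_nat_le_iff \<open>nat _ \<le> n\<close>)
    qed
    then have "64 \<le> \<epsilon>^6 * n" using assms by (simp add: divide_le_eq mult.commute)
    also have "\<epsilon>^6 * n = (\<epsilon>^3 * sqrt n)^2" using npos by (simp add: power_mult_distrib power2_eq_square power3_eq_cube) (simp add: algebra_simps power_def)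
    finally have "8^2 \<le> (\<epsilon>^3 * sqrt n)^2" by simp
    then have s8: "8 \<le> \<epsilon>^3 * sqrt n" by (rule power2_le_imp_le) (use assms in auto)
    have lnpos: "0 < ln (real n)" using n2 by simp
    have "ln (real n) = 2 * ln (sqrt n)" using npos by (simp add: ln_sqrt)
    also have "ln (sqrt n) < sqrt n" using npos by (intro ln_less_self) simp
    then have "2 * ln (sqrt n) < 2 * sqrt n" by simp
    finally have lnb: "ln (real n) < 2 * sqrt n" .
    have "\<epsilon>^3 * n / ln n \<ge> \<epsilon>^3 * n / (2 * sqrt n)"
      using lnpos lnb assms npos by (intro divide_left_mono) auto
    moreover have "\<epsilon>^3 * n / (2 * sqrt n) = \<epsilon>^3 * sqrt n / 2"
      using npos by (simp add: field_simps)
    ultimately show ?thesis using n2 s8 by linarith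
  qed
  then show ?thesis by blast
qed

lemma embed_main:
  fixes \<epsilon> :: real and n :: nat and A B S T :: "nat set" and EG EH :: "(nat \<times> nat) set"
  assumes eps: "0 < \<epsilon>" "\<epsilon> < 1/2" and n2: "2 \<le> n" and big: "4 \<le> \<epsilon>^3 * real n / ln (real n)"
    and G: "bip_graph A B EG" and H: "bip_graph S T EH"
    and cards: "card A = n" "card B = n" "card S = n" "card T = n"
    and degA: "\<forall>x\<in>A. real (degL EG x) > (1/2 + \<epsilon>) * real n"
    and degB: "\<forall>y\<in>B. real (degR EG y) > (1/2 + \<epsilon>) * real n"
    and degS: "\<forall>x\<in>S. real (degL EH x) < \<epsilon>^4 / 100 * (real n / ln (real n))"
    and degT: "\<forall>y\<in>T. degR EH y = 1"
  shows "bip_embeds S T EH A B EG"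
proof -
  have finA: "finite A" and finB: "finite B" and EGsub: "EG \<subseteq> A \<times> B" using G by (auto simp: bip_graph_def)
  have finS: "finite S" and finT: "finite T" and EHsub: "EH \<subseteq> S \<times> T" using H by (auto simp: bip_graph_def)
  have cen_ex: "\<exists>!s. (s, t) \<in> EH" if t: "t \<in> T" for t
  proof -
    have "card {x. (x, t) \<in> EH} = 1" using degT t by (simp add: degR_def)
    then obtain s where "{x. (x, t) \<in> EH} = {s}" by (rule card_1_singletonE)
    then show ?thesis by (metis mem_Collect_eq singletonD singletonI)
  qed
  define cen where "cen t = (THE s. (s, t) \<in> EH)" for t
  have cen1: "(cen t, t) \<in> EH" if "t \<in> T" for t
    using theI'[OF cen_ex[OF that]] by (simp add: cen_def)
  have cen2: "s = cen t" if "t \<in> T" "(s, t) \<in> EH" for s t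
    using the1_equality[OF cen_ex[OF that(1)] that(2)] by (simp add: cen_def)
  have cenS: "cen t \<in> S" if "t \<in> T" for t using cen1[OF that] EHsub by auto
  define d where "d s = degL EH s" for s
  have d_fib: "d s = card {t\<in>T. cen t = s}" if "s \<in> S" for s
  proof -
    have "{y. (s, y) \<in> EH} = {t\<in>T. cen t = s}"
      using EHsub cen1 cen2 by blast
    then show ?thesis by (simp add: d_def degL_def)
  qed
  have sumd: "(\<Sum>s\<in>S. d s) = n"
  proof -
    have "T = (\<Union>s\<in>S. {t\<in>T. cen t = s})" using cenS by blast
    then have "card T = card (\<Union>s\<in>S. {t\<in>T. cen t = s})" by simp
    also have "\<dots> = (\<Sum>s\<in>S. card {t\<in>T. cen t = s})"
      using finS finT by (intro card_UN_disjoint) auto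
    also have "\<dots> = (\<Sum>s\<in>S. d s)" using d_fib by simp
    finally show ?thesis using cards by simp
  qed
  have Sne: "S \<noteq> {}" using cards n2 by auto
  define Dm where "Dm = Max (d ` S)"
  have dle: "d s \<le> Dm" if "s \<in> S" for s using finS that by (simp add: Dm_def)
  have Dm_bound: "real Dm < \<epsilon>^4 / 100 * (real n / ln (real n))"
  proof -
    have "Dm \<in> d ` S" using finS Sne by (simp add: Dm_def)
    then show ?thesis using degS by (auto simp: d_def)
  qed
  define m where "m = nat \<lfloor>\<epsilon>^2 * n / (2 * ln n)\<rfloor>"
  note prm = params[OF eps n2 big Dm_bound m_def]
  have "0 + (\<Sum>x\<in>S. int (d x) - 1) = 0"
    using sumd cards by (simp add: sum_subtractf of_nat_sum[symmetric])
  then obtain xs where xs: "distinct xs" "set xs = S"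
    "\<forall>k\<le>length xs. -1 \<le> 0 + (\<Sum>i<k. int (d (xs!i)) - 1) \<and> 0 + (\<Sum>i<k. int (d (xs!i)) - 1) \<le> int Dm"
    using balanced_order[of S d Dm 0] finS dle by auto
  have lenxs: "length xs = n" using xs cards distinct_card by fastforce
  define e where "e i = d (xs ! i)" for i
  have bxs: "bij_betw (nth xs) {..<n} S" using bij_betw_nth[OF xs(1)] xs lenxs by (simp add: lessThan_atLeast0)
  have sumn: "(\<Sum>i<n. e i) = n"
    using sum.reindex_bij_betw[OF bxs, of d] sumd by (simp add: e_def)
  have Pb: "\<forall>k\<le>n. \<bar>real (\<Sum>i<k. e i) - real k\<bar> \<le> real Dm + 1"
  proof (intro allI impI)
    fix k assume k: "k \<le> n"
    have "(\<Sum>i<k. int (d (xs!i)) - 1) = int (\<Sum>i<k. e i) - int k"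
      by (simp add: sum_subtractf e_def of_nat_sum)
    then have "-1 \<le> int (\<Sum>i<k. e i) - int k" "int (\<Sum>i<k. e i) - int k \<le> int Dm"
      using xs(3) k lenxs by auto
    then have "-1 \<le> real (\<Sum>i<k. e i) - real k" "real (\<Sum>i<k. e i) - real k \<le> real Dm"
      by linarith+
    then show "\<bar>real (\<Sum>i<k. e i) - real k\<bar> \<le> real Dm + 1" by linarith
  qed
  define as where "as = sorted_list_of_set A"
  have as: "distinct as" "set as = A" "length as = n" using finA cards by (auto simp: as_def)
  have bas: "bij_betw (nth as) {..<n} A" using bij_betw_nth[OF as(1)] as by (simp add: lessThan_atLeast0)
  define U where "U b = {j\<in>{..<n}. (as!j, b) \<notin> EG}" for b
  have cardU: "real (card (U b)) \<le> (1/2 - \<epsilon>) * n" if b: "b \<in> B" for b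
  proof -
    have "nth as ` U b = {a\<in>A. (a, b) \<notin> EG}" using bas unfolding U_def bij_betw_def by auto
    moreover have "inj_on (nth as) (U b)" using bas unfolding U_def bij_betw_def by (auto intro: inj_on_subset)
    ultimately have c1: "card (U b) = card {a\<in>A. (a, b) \<notin> EG}" by (metis card_image)
    have "{x. (x, b) \<in> EG} = {a\<in>A. (a, b) \<in> EG}" using EGsub by auto
    then have c2: "degR EG b = card {a\<in>A. (a, b) \<in> EG}" by (simp add: degR_def)
    have "card {a\<in>A. (a, b) \<notin> EG} + card {a\<in>A. (a, b) \<in> EG} = card A"
      using finA by (subst card_Un_disjoint[symmetric]) (auto intro: arg_cong[where f=card])
    then have "real (card (U b)) = n - real (degR EG b)" using c1 c2 cards by simp
    moreover have "(1/2 + \<epsilon>) * real n < real (degR EG b)" using degB b by blast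
    ultimately show ?thesis by (simp add: algebra_simps)
  qed
  define F where "F = U ` B"
  have Fprops: "finite F" "card F \<le> n" "\<forall>V\<in>F. V \<subseteq> {..<n} \<and> real (card V) \<le> (1/2 - \<epsilon>) * n"
    using finB cards cardU card_image_le[OF finB, of U] by (auto simp: F_def U_def)
  obtain \<pi> where pi: "bij_betw \<pi> {..<n} {..<n}"
    "\<forall>V\<in>F. (\<Sum>i<n. if \<pi> i \<in> V then real (e i) else 0) \<le> (1/2 + \<epsilon>) * n"
    using core[OF prm(1) prm(2) eps _ prm(3) Pb sumn Fprops prm(4)] by auto
  define f where "f s = as ! (\<pi> (inv_into {..<n} (nth xs) s))" for s
  have bf: "bij_betw f S A"
  proof -
    have "bij_betw (nth as \<circ> (\<pi> \<circ> inv_into {..<n} (nth xs))) S A"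
      using bij_betw_trans[OF bij_betw_trans[OF bij_betw_inv_into[OF bxs] pi(1)] bas] .
    moreover have "f = nth as \<circ> (\<pi> \<circ> inv_into {..<n} (nth xs))" by (simp add: f_def fun_eq_iff)
    ultimately show ?thesis by simp
  qed
  have fxs: "f (xs ! i) = as ! (\<pi> i)" if "i < n" for i
    using bxs that by (simp add: f_def bij_betw_def inv_into_f_f)
  have key: "(\<Sum>s\<in>{s\<in>S. (f s, b) \<notin> EG}. real (d s)) \<le> (1/2 + \<epsilon>) * n" if b: "b \<in> B" for b
  proof -
    have "(\<Sum>s\<in>{s\<in>S. (f s, b) \<notin> EG}. real (d s)) = (\<Sum>s\<in>S. if (f s, b) \<notin> EG then real (d s) else 0)"
      using finS by (simp add: sum.inter_filter)
    also have "\<dots> = (\<Sum>i<n. if (f (xs!i), b) \<notin> EG then real (d (xs!i)) else 0)"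
      using sum.reindex_bij_betw[OF bxs, of "\<lambda>s. if (f s, b) \<notin> EG then real (d s) else 0"] by simp
    also have "\<dots> = (\<Sum>i<n. if \<pi> i \<in> U b then real (e i) else 0)"
    proof (intro sum.cong refl)
      fix i assume i: "i \<in> {..<n}"
      have "\<pi> i < n" using pi(1) i by (auto simp: bij_betw_def)
      then show "(if (f (xs!i), b) \<notin> EG then real (d (xs!i)) else 0) = (if \<pi> i \<in> U b then real (e i) else 0)"
        using fxs i by (simp add: U_def e_def)
    qed
    also have "\<dots> \<le> (1/2 + \<epsilon>) * n" using pi(2) b by (simp add: F_def)
    finally show ?thesis .
  qed
  define R where "R t = {b\<in>B. (f (cen t), b) \<in> EG}" for t
  have hall_cond: "\<forall>Y\<subseteq>T. card Y \<le> card (\<Union>(R ` Y))"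
  proof (intro allI impI)
    fix Y assume Y: "Y \<subseteq> T"
    show "card Y \<le> card (\<Union>(R ` Y))"
    proof (cases "Y = {}")
      case True then show ?thesis by simp
    next
      case Yne: False
      have finY: "finite Y" using Y finT finite_subset by blast
      have sub: "\<Union>(R ` Y) \<subseteq> B" by (auto simp: R_def)
      show ?thesis
      proof (cases "\<Union>(R ` Y) = B")
        case True
        have "card Y \<le> card T" using Y finT by (rule card_mono[rotated])
        then show ?thesis using True cards by simp
      next
        case False
        then obtain b where b: "b \<in> B" "b \<notin> \<Union>(R ` Y)" using sub by blast
        let ?Cs = "cen ` Y"
        have CsS: "?Cs \<subseteq> {s\<in>S. (f s, b) \<notin> EG}" using b Y cenS by (auto simp: R_def)
        have "Y \<subseteq> (\<Union>s\<in>?Cs. {t\<in>T. cen t = s})" using Y by auto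
        moreover have fU: "finite (\<Union>s\<in>?Cs. {t\<in>T. cen t = s})" by (rule finite_subset[OF _ finT]) auto
        ultimately have "card Y \<le> card (\<Union>s\<in>?Cs. {t\<in>T. cen t = s})"
          by (simp add: card_mono)
        also have "\<dots> \<le> (\<Sum>s\<in>?Cs. card {t\<in>T. cen t = s})"
          using finY by (intro card_UN_le) auto
        also have "\<dots> = (\<Sum>s\<in>?Cs. d s)" using d_fib Y cenS by (intro sum.cong refl) auto
        finally have "real (card Y) \<le> real (\<Sum>s\<in>?Cs. d s)" by (simp only: of_nat_le_iff)
        also have "\<dots> = (\<Sum>s\<in>?Cs. real (d s))" by simp
        also have "\<dots> \<le> (\<Sum>s\<in>{s\<in>S. (f s, b) \<notin> EG}. real (d s))"
          using CsS finS by (intro sum_mono2) auto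
        also have "\<dots> \<le> (1/2 + \<epsilon>) * n" by (rule key[OF b(1)])
        finally have cY: "real (card Y) \<le> (1/2 + \<epsilon>) * n" .
        obtain t0 where t0: "t0 \<in> Y" using Yne by blast
        have fa: "f (cen t0) \<in> A" using bf cenS t0 Y by (auto simp: bij_betw_def)
        have "{y. (f (cen t0), y) \<in> EG} = R t0" using EGsub by (auto simp: R_def)
        moreover have "real (degL EG (f (cen t0))) > (1/2 + \<epsilon>) * n" using degA fa by blast
        ultimately have "real (card (R t0)) > (1/2 + \<epsilon>) * n" by (simp add: degL_def)
        moreover have "card (R t0) \<le> card (\<Union>(R ` Y))"
          using t0 by (intro card_mono[OF finite_subset[OF sub finB]]) auto
        ultimately show ?thesis using cY by linarith
      qed
    qed
  qed
  obtain h where h: "inj_on h T" "\<forall>t\<in>T. h t \<in> R t"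
    using hall[OF finT _ hall_cond] finB by (auto simp: R_def)
  have bh: "bij_betw h T B"
  proof -
    have "h ` T \<subseteq> B" using h by (auto simp: R_def)
    moreover have "card (h ` T) = card B" using h cards by (simp add: card_image)
    ultimately have "h ` T = B" using finB by (simp add: card_subset_eq)
    then show ?thesis using h by (simp add: bij_betw_def)
  qed
  have edges: "\<forall>(s, t)\<in>EH. (f s, h t) \<in> EG"
  proof (intro ballI, clarify)
    fix s t assume st: "(s, t) \<in> EH"
    then have t: "t \<in> T" using EHsub by auto
    then have "s = cen t" using cen2 st by blast
    then show "(f s, h t) \<in> EG" using h t by (auto simp: R_def)
  qed
  show ?thesis unfolding bip_embeds_def using bf bh edges by blast
qed


theorem theorem7:
  fixes \<epsilon> :: real
  assumes "0 < \<epsilon>" and "\<epsilon> < 1/2"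
  shows "\<exists>n0::nat. \<forall>n > n0. \<forall>(A::nat set) B EG S T EH.
     bip_graph A B EG \<and> bip_graph S T EH \<and>
     card A = n \<and> card B = n \<and> card S = n \<and> card T = n \<and>
     (\<forall>x\<in>A. real (degL EG x) > (1/2 + \<epsilon>) * real n) \<and>
     (\<forall>y\<in>B. real (degR EG y) > (1/2 + \<epsilon>) * real n) \<and>
     (\<forall>x\<in>S. real (degL EH x) < \<epsilon>^4 / 100 * (real n / ln (real n))) \<and>
     (\<forall>y\<in>T. degR EH y = 1)
     \<longrightarrow> bip_embeds S T EH A B EG"
proof -
  obtain N where N: "\<forall>n::nat. n > N \<longrightarrow> 2 \<le> n \<and> 4 \<le> \<epsilon>^3 * real n / ln (real n)"
    using n0_exists[OF assms(1)] by blast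
  show ?thesis
  proof (intro exI[of _ N] allI impI)
    fix n :: nat and A B S T :: "nat set" and EG EH :: "(nat \<times> nat) set"
    assume n: "n > N" and hyp: "bip_graph A B EG \<and> bip_graph S T EH \<and>
     card A = n \<and> card B = n \<and> card S = n \<and> card T = n \<and>
     (\<forall>x\<in>A. real (degL EG x) > (1/2 + \<epsilon>) * real n) \<and>
     (\<forall>y\<in>B. real (degR EG y) > (1/2 + \<epsilon>) * real n) \<and>
     (\<forall>x\<in>S. real (degL EH x) < \<epsilon>^4 / 100 * (real n / ln (real n))) \<and>
     (\<forall>y\<in>T. degR EH y = 1)"
    have nn: "2 \<le> n" "4 \<le> \<epsilon>^3 * real n / ln (real n)" using N n by auto
    show "bip_embeds S T EH A B EG"
      by (rule embed_main[OF assms nn]) (use hyp in auto)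
  qed
qed

end
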